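(* Let $\alpha>0$ and let $\varphi\ge0$ be a measurable function on $\mathbb{C}$ satisfying condition $(I_1)$. Then $T_\varphi$ is bounded on $F^\infty_\alpha$ if and only if $\tilde{\varphi}_t\in L^\infty(\mathbb{C},dA)$ for every $t>0$.
   Context: $d\lambda_\alpha(w)=\frac{\alpha}{\pi}e^{-\alpha|w|^2}dA(w)$, $K_z(w)=e^{\alpha\bar z w}$. $\varphi$ satisfies condition $(I_1)$ if $\int_{\mathbb{C}}|\varphi(w)||K_z(w)|^2\,d\lambda_\alpha(w)<\infty$ for all $z\in\mathbb{C}$. $F^\infty_\alpha$ is the space of entire $f$ with $\|f\|_{\infty,\alpha}=\sup_z|f(z)|e^{-\alpha|z|^2/2}<\infty$. $T_\varphi f(z)=\int_{\mathbb{C}}\varphi(w)f(w)\overline{K_z(w)}\,d\lambda_\alpha(w)$. For $t>0$, $\tilde{\varphi}_t(z)=\frac{\alpha}{\pi}\int_{\mathbb{C}}\varphi(w)e^{-\alpha t|z-w|^2/2}\,dA(w)$. *)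

theory Defs
  imports "HOL-Analysis.Analysis"
begin

text \<open>Gaussian weight of d lambda_alpha with respect to dA (Lebesgue measure lborel on C).\<close>
definition gauss_wt :: "real \<Rightarrow> complex \<Rightarrow> real" where
  "gauss_wt \<alpha> w = (\<alpha> / pi) * exp (- \<alpha> * (cmod w)\<^sup>2)"

definition fock_kernel :: "real \<Rightarrow> complex \<Rightarrow> complex \<Rightarrow> complex" where
  "fock_kernel \<alpha> z w = exp (complex_of_real \<alpha> * cnj z * w)"

definition cond_I1 :: "real \<Rightarrow> (complex \<Rightarrow> real) \<Rightarrow> bool" where
  "cond_I1 \<alpha> \<phi> \<longleftrightarrow> (\<forall>z. (\<integral>\<^sup>+ w. ennreal (\<bar>\<phi> w\<bar> * (cmod (fock_kernel \<alpha> z w))\<^sup>2 * gauss_wt \<alpha> w) \<partial>lborel) < \<infinity>)"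

definition fock_inf :: "real \<Rightarrow> (complex \<Rightarrow> complex) set" where
  "fock_inf \<alpha> = {f. f holomorphic_on UNIV \<and>
      (\<exists>C. \<forall>z. cmod (f z) * exp (- \<alpha> * (cmod z)\<^sup>2 / 2) \<le> C)}"

definition fock_inf_norm :: "real \<Rightarrow> (complex \<Rightarrow> complex) \<Rightarrow> real" where
  "fock_inf_norm \<alpha> f = (SUP z. cmod (f z) * exp (- \<alpha> * (cmod z)\<^sup>2 / 2))"

definition toeplitz :: "real \<Rightarrow> (complex \<Rightarrow> real) \<Rightarrow> (complex \<Rightarrow> complex) \<Rightarrow> complex \<Rightarrow> complex" where
  "toeplitz \<alpha> \<phi> f z = (\<integral> w. complex_of_real (\<phi> w * gauss_wt \<alpha> w) * f w * cnj (fock_kernel \<alpha> z w) \<partial>lborel)"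

definition toeplitz_bounded_fock_inf :: "real \<Rightarrow> (complex \<Rightarrow> real) \<Rightarrow> bool" where
  "toeplitz_bounded_fock_inf \<alpha> \<phi> \<longleftrightarrow> (\<exists>C. \<forall>f \<in> fock_inf \<alpha>.
      (\<forall>z. integrable lborel (\<lambda>w. complex_of_real (\<phi> w * gauss_wt \<alpha> w) * f w * cnj (fock_kernel \<alpha> z w)))
      \<and> toeplitz \<alpha> \<phi> f \<in> fock_inf \<alpha>
      \<and> fock_inf_norm \<alpha> (toeplitz \<alpha> \<phi> f) \<le> C * fock_inf_norm \<alpha> f)"

definition phi_tilde :: "real \<Rightarrow> (complex \<Rightarrow> real) \<Rightarrow> real \<Rightarrow> complex \<Rightarrow> ennreal" where
  "phi_tilde \<alpha> \<phi> t z = (\<integral>\<^sup>+ w. ennreal ((\<alpha> / pi) * \<phi> w * exp (- \<alpha> * t * (cmod (z - w))\<^sup>2 / 2)) \<partial>lborel)"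

definition ess_bounded_ennreal :: "(complex \<Rightarrow> ennreal) \<Rightarrow> bool" where
  "ess_bounded_ennreal g \<longleftrightarrow> g \<in> borel_measurable lborel \<and> (\<exists>C::real. AE z in lborel. g z \<le> ennreal C)"

end

theory Submission
  imports Defs "HOL-Probability.Distributions"
begin


lemma gauss1:
  fixes c :: real assumes c: "c > 0"
  shows "(\<integral>\<^sup>+ t. ennreal (exp (- c * t\<^sup>2)) \<partial>lborel) = ennreal (sqrt (pi / c))"
proof -
  define s where "s = 1 / sqrt (2 * c)"
  have s: "s > 0" using c by (simp add: s_def)
  have s2: "s\<^sup>2 = 1 / (2*c)" using c by (simp add: s_def power_divide)
  have eq: "exp (- c * t\<^sup>2) = sqrt (pi / c) * normal_density 0 s t" for t
  proof -
    have "sqrt (2 * pi * s\<^sup>2) = sqrt (pi / c)" using s2 by simp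
    moreover have "- c * t\<^sup>2 = -(t - 0)\<^sup>2 / (2 * s\<^sup>2)" proof -
      have "2 * s\<^sup>2 = 1 / c" using s2 c by (simp add: field_simps)
      then show ?thesis by simp
    qed
    ultimately show ?thesis unfolding normal_density_def using c by simp
  qed
  have "(\<integral>\<^sup>+ t. ennreal (exp (- c * t\<^sup>2)) \<partial>lborel) = (\<integral>\<^sup>+ t. ennreal (sqrt (pi / c)) * ennreal (normal_density 0 s t) \<partial>lborel)"
    by (rule nn_integral_cong) (simp only: eq, rule ennreal_mult, use c in auto)
  also have "\<dots> = ennreal (sqrt (pi / c)) * (\<integral>\<^sup>+ t. ennreal (normal_density 0 s t) \<partial>lborel)"
    by (rule nn_integral_cmult) simp
  also have "(\<integral>\<^sup>+ t. ennreal (normal_density 0 s t) \<partial>lborel) = 1"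
    by (subst nn_integral_eq_integral) (auto simp: normal_density_nonneg integrable_normal_density[OF s] integral_normal_density[OF s])
  finally show ?thesis by simp
qed

lemma gauss2:
  fixes c :: real assumes c: "c > 0"
  shows "(\<integral>\<^sup>+ a. ennreal (exp (- c * (cmod (a::complex))\<^sup>2)) \<partial>lborel) = ennreal (pi / c)"
proof -
  have "(\<integral>\<^sup>+ a. ennreal (exp (- c * (cmod (a::complex))\<^sup>2)) \<partial>lborel)
     = (\<integral>\<^sup>+ (a::complex). (\<Prod>b\<in>Basis. (\<lambda>b t. ennreal (exp (- c * t\<^sup>2))) b (a \<bullet> b)) \<partial>lborel)"
    by (rule nn_integral_cong) (simp add: Basis_complex_def cmod_power2 exp_add[symmetric] ennreal_mult[symmetric] algebra_simps)
  also have "\<dots> = (\<Prod>b\<in>(Basis::complex set). (\<integral>\<^sup>+ t. ennreal (exp (- c * t\<^sup>2)) \<partial>lborel))"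
    by (rule nn_integral_lborel_prod) auto
  also have "\<dots> = ennreal (sqrt (pi / c)) * ennreal (sqrt (pi / c))"
    using gauss1[OF c] by (simp add: Basis_complex_def)
  also have "\<dots> = ennreal (pi / c)"
    using c by (simp add: ennreal_mult[symmetric])
  finally show ?thesis .
qed

lemma gauss_shift:
  fixes c :: real and v :: complex assumes c: "c > 0"
  shows "(\<integral>\<^sup>+ a. ennreal (exp (- c * (cmod (a - v))\<^sup>2)) \<partial>lborel) = ennreal (pi / c)"
proof -
  have "(\<integral>\<^sup>+ a. ennreal (exp (- c * (cmod (a - v))\<^sup>2)) \<partial>lborel)
      = (\<integral>\<^sup>+ a. ennreal (exp (- c * (cmod (a - v))\<^sup>2)) \<partial>(distr lborel borel ((+) v)))"
    by (simp add: lborel_distr_plus)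
  also have "\<dots> = (\<integral>\<^sup>+ x. ennreal (exp (- c * (cmod ((v + x) - v))\<^sup>2)) \<partial>lborel)"
    by (subst nn_integral_distr) auto
  also have "\<dots> = ennreal (pi / c)" using gauss2[OF c] by simp
  finally show ?thesis .
qed

lemma sq_complete1:
  fixes p q x y u :: real assumes "p > 0" "q > 0"
  shows "p * (x - y)\<^sup>2 + q * (y - u)\<^sup>2 = (p + q) * (y - (p * x + q * u) / (p + q))\<^sup>2 + p * q / (p + q) * (x - u)\<^sup>2"
proof -
  have pq: "p + q \<noteq> 0" using assms by simp
  have "(y - (p * x + q * u) / (p + q)) = (p * (y - x) + q * (y - u)) / (p + q)"
    using pq by (simp add: field_simps)
  then have "(p + q) * (y - (p * x + q * u) / (p + q))\<^sup>2 = (p * (y - x) + q * (y - u))\<^sup>2 / (p + q)"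
    using pq by (simp add: power2_eq_square)
  moreover have "(p * (y - x) + q * (y - u))\<^sup>2 / (p + q) + p * q / (p + q) * (x - u)\<^sup>2 = ((p * (y - x) + q * (y - u))\<^sup>2 + p * q * (x - u)\<^sup>2) / (p + q)"
    by (simp add: add_divide_distrib)
  moreover have "(p * (y - x) + q * (y - u))\<^sup>2 + p * q * (x - u)\<^sup>2 = (p + q) * (p * (x - y)\<^sup>2 + q * (y - u)\<^sup>2)"
    by (simp add: power2_eq_square algebra_simps)
  ultimately show ?thesis using pq by simp
qed

lemma sq_complete:
  fixes p q :: real and z a w :: complex assumes "p > 0" "q > 0"
  shows "p * (cmod (z - a))\<^sup>2 + q * (cmod (a - w))\<^sup>2
      = (p + q) * (cmod (a - (of_real p * z + of_real q * w) / of_real (p + q)))\<^sup>2 + p * q / (p + q) * (cmod (z - w))\<^sup>2"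
proof -
  have pq: "p + q \<noteq> 0" using assms by simp
  have re: "Re ((of_real p * z + of_real q * w) / of_real (p + q)) = (p * Re z + q * Re w) / (p + q)"
    by (simp add: Re_divide_of_real)
  have im: "Im ((of_real p * z + of_real q * w) / of_real (p + q)) = (p * Im z + q * Im w) / (p + q)"
    by (simp add: Im_divide_of_real)
  show ?thesis
    unfolding cmod_power2 using sq_complete1[OF assms, of "Re z" "Re a" "Re w"] sq_complete1[OF assms, of "Im z" "Im a" "Im w"]
    by (simp add: re im algebra_simps)
qed

lemma gauss_conv:
  fixes p q :: real and z w :: complex assumes p: "p > 0" and q: "q > 0"
  shows "(\<integral>\<^sup>+ a. ennreal (exp (- p * (cmod (z - a))\<^sup>2) * exp (- q * (cmod (a - w))\<^sup>2)) \<partial>lborel)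
      = ennreal (pi / (p + q) * exp (- (p * q / (p + q)) * (cmod (z - w))\<^sup>2))"
proof -
  define c where "c = (of_real p * z + of_real q * w) / of_real (p + q)"
  have "(\<integral>\<^sup>+ a. ennreal (exp (- p * (cmod (z - a))\<^sup>2) * exp (- q * (cmod (a - w))\<^sup>2)) \<partial>lborel)
     = (\<integral>\<^sup>+ a. ennreal (exp (- (p * q / (p + q)) * (cmod (z - w))\<^sup>2)) * ennreal (exp (- (p + q) * (cmod (a - c))\<^sup>2)) \<partial>lborel)"
  proof (rule nn_integral_cong)
    fix a
    have "exp (- p * (cmod (z - a))\<^sup>2) * exp (- q * (cmod (a - w))\<^sup>2) = exp (- (p * q / (p + q)) * (cmod (z - w))\<^sup>2) * exp (- (p + q) * (cmod (a - c))\<^sup>2)"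
      unfolding exp_add[symmetric] using sq_complete[OF p q, of z a w] unfolding c_def by (simp add: algebra_simps)
    then show "ennreal (exp (- p * (cmod (z - a))\<^sup>2) * exp (- q * (cmod (a - w))\<^sup>2)) = ennreal (exp (- (p * q / (p + q)) * (cmod (z - w))\<^sup>2)) * ennreal (exp (- (p + q) * (cmod (a - c))\<^sup>2))"
      by (simp add: ennreal_mult)
  qed
  also have "\<dots> = ennreal (exp (- (p * q / (p + q)) * (cmod (z - w))\<^sup>2)) * (\<integral>\<^sup>+ a. ennreal (exp (- (p + q) * (cmod (a - c))\<^sup>2)) \<partial>lborel)"
    by (rule nn_integral_cmult) simp
  also have "\<dots> = ennreal (exp (- (p * q / (p + q)) * (cmod (z - w))\<^sup>2)) * ennreal (pi / (p + q))"
    using gauss_shift[of "p + q" c] p q by simp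
  also have "\<dots> = ennreal (pi / (p + q) * exp (- (p * q / (p + q)) * (cmod (z - w))\<^sup>2))"
    using p q by (simp add: ennreal_mult[symmetric] mult.commute)
  finally show ?thesis .
qed

lemma meas_kernel:
  fixes \<phi> :: "complex \<Rightarrow> real" and c :: real
  assumes [measurable]: "\<phi> \<in> borel_measurable lborel"
  shows "(\<lambda>(x, y). ennreal (\<phi> y * exp (- c * (cmod (x - y))\<^sup>2))) \<in> borel_measurable (lborel \<Otimes>\<^sub>M lborel)"
  by measurable

lemma meas_phi_tilde:
  fixes \<phi> :: "complex \<Rightarrow> real"
  assumes [measurable]: "\<phi> \<in> borel_measurable lborel"
  shows "phi_tilde \<alpha> \<phi> t \<in> borel_measurable lborel"
proof -
  have "(\<lambda>(z, w). ennreal ((\<alpha> / pi) * \<phi> w * exp (- \<alpha> * t * (cmod (z - w))\<^sup>2 / 2))) \<in> borel_measurable (lborel \<Otimes>\<^sub>M lborel)"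
    by measurable
  from lborel.borel_measurable_nn_integral_fst[OF this] show ?thesis
    unfolding phi_tilde_def by simp
qed

lemma smooth_bound:
  fixes \<phi> :: "complex \<Rightarrow> real"
  assumes \<alpha>: "\<alpha> > 0" and nn: "\<And>w. \<phi> w \<ge> 0"
    and meas[measurable]: "\<phi> \<in> borel_measurable lborel"
    and st: "0 < s" "s < t"
    and AEb: "AE a in lborel. phi_tilde \<alpha> \<phi> t a \<le> ennreal M"
  shows "\<exists>B. \<forall>z. phi_tilde \<alpha> \<phi> s z \<le> ennreal B"
proof -
  define M' where "M' = max M 0"
  have M': "M' \<ge> 0" by (simp add: M'_def)
  have AEb': "AE a in lborel. phi_tilde \<alpha> \<phi> t a \<le> ennreal M'"
    using AEb by eventually_elim (auto simp: M'_def intro: order.trans ennreal_leI)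
  define q where "q = \<alpha> * t / 2"
  define p where "p = q * s / (t - s)"
  have q: "q > 0" using \<alpha> st by (simp add: q_def)
  have p: "p > 0" using q st by (simp add: p_def)
  have pq: "p * q / (p + q) = \<alpha> * s / 2"
  proof -
    have "p + q = q * t / (t - s)" using st by (simp add: p_def field_simps)
    then have "p * q / (p + q) = (q * s / (t - s)) * q / (q * t / (t - s))" by (simp add: p_def)
    also have "\<dots> = q * s / t" using st q by (simp add: field_simps)
    finally show ?thesis using st by (simp add: q_def)
  qed
  have key: "phi_tilde \<alpha> \<phi> s z \<le> ennreal (M' * (p + q) / p)" for z
  proof -
    have "ennreal (pi / (p + q)) * phi_tilde \<alpha> \<phi> s z
        = (\<integral>\<^sup>+ w. ennreal (pi / (p + q)) * ennreal ((\<alpha> / pi) * \<phi> w * exp (- \<alpha> * s * (cmod (z - w))\<^sup>2 / 2)) \<partial>lborel)"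
      unfolding phi_tilde_def by (rule nn_integral_cmult[symmetric]) simp
    also have "\<dots> = (\<integral>\<^sup>+ w. ennreal ((\<alpha> / pi) * \<phi> w) * ennreal (pi / (p + q) * exp (- (p * q / (p + q)) * (cmod (z - w))\<^sup>2)) \<partial>lborel)"
    proof (rule nn_integral_cong)
      fix w
      have "(pi / (p + q)) * ((\<alpha> / pi) * \<phi> w * exp (- \<alpha> * s * (cmod (z - w))\<^sup>2 / 2))
          = ((\<alpha> / pi) * \<phi> w) * (pi / (p + q) * exp (- (p * q / (p + q)) * (cmod (z - w))\<^sup>2))"
      proof -
        have e: "- \<alpha> * s * (cmod (z - w))\<^sup>2 / 2 = - (p * q / (p + q)) * (cmod (z - w))\<^sup>2" unfolding pq by simp
        show ?thesis unfolding e by (simp only: ac_simps)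
      qed
      then show "ennreal (pi / (p + q)) * ennreal ((\<alpha> / pi) * \<phi> w * exp (- \<alpha> * s * (cmod (z - w))\<^sup>2 / 2)) = ennreal ((\<alpha> / pi) * \<phi> w) * ennreal (pi / (p + q) * exp (- (p * q / (p + q)) * (cmod (z - w))\<^sup>2))"
        using p q \<alpha> nn[of w] by (simp add: ennreal_mult[symmetric])
    qed
    also have "\<dots> = (\<integral>\<^sup>+ w. ennreal ((\<alpha> / pi) * \<phi> w) * (\<integral>\<^sup>+ a. ennreal (exp (- p * (cmod (z - a))\<^sup>2) * exp (- q * (cmod (a - w))\<^sup>2)) \<partial>lborel) \<partial>lborel)"
      by (simp only: gauss_conv[OF p q])
    also have "\<dots> = (\<integral>\<^sup>+ w. (\<integral>\<^sup>+ a. ennreal (exp (- p * (cmod (z - a))\<^sup>2)) * ennreal ((\<alpha> / pi) * \<phi> w * exp (- q * (cmod (a - w))\<^sup>2)) \<partial>lborel) \<partial>lborel)"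
    proof (rule nn_integral_cong)
      fix w
      have "ennreal ((\<alpha> / pi) * \<phi> w) * (\<integral>\<^sup>+ a. ennreal (exp (- p * (cmod (z - a))\<^sup>2) * exp (- q * (cmod (a - w))\<^sup>2)) \<partial>lborel)
         = (\<integral>\<^sup>+ a. ennreal ((\<alpha> / pi) * \<phi> w) * ennreal (exp (- p * (cmod (z - a))\<^sup>2) * exp (- q * (cmod (a - w))\<^sup>2)) \<partial>lborel)"
        by (rule nn_integral_cmult[symmetric]) simp
      also have "\<dots> = (\<integral>\<^sup>+ a. ennreal (exp (- p * (cmod (z - a))\<^sup>2)) * ennreal ((\<alpha> / pi) * \<phi> w * exp (- q * (cmod (a - w))\<^sup>2)) \<partial>lborel)"
        by (rule nn_integral_cong) (use \<alpha> nn[of w] in \<open>simp add: ennreal_mult[symmetric] algebra_simps\<close>)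
      finally show "ennreal ((\<alpha> / pi) * \<phi> w) * (\<integral>\<^sup>+ a. ennreal (exp (- p * (cmod (z - a))\<^sup>2) * exp (- q * (cmod (a - w))\<^sup>2)) \<partial>lborel) = (\<integral>\<^sup>+ a. ennreal (exp (- p * (cmod (z - a))\<^sup>2)) * ennreal ((\<alpha> / pi) * \<phi> w * exp (- q * (cmod (a - w))\<^sup>2)) \<partial>lborel)" .
    qed
    also have "\<dots> = (\<integral>\<^sup>+ a. (\<integral>\<^sup>+ w. ennreal (exp (- p * (cmod (z - a))\<^sup>2)) * ennreal ((\<alpha> / pi) * \<phi> w * exp (- q * (cmod (a - w))\<^sup>2)) \<partial>lborel) \<partial>lborel)"
      by (rule lborel_pair.Fubini') measurable
    also have "\<dots> = (\<integral>\<^sup>+ a. ennreal (exp (- p * (cmod (z - a))\<^sup>2)) * phi_tilde \<alpha> \<phi> t a \<partial>lborel)"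
    proof (rule nn_integral_cong)
      fix a
      have "(\<integral>\<^sup>+ w. ennreal (exp (- p * (cmod (z - a))\<^sup>2)) * ennreal ((\<alpha> / pi) * \<phi> w * exp (- q * (cmod (a - w))\<^sup>2)) \<partial>lborel)
          = ennreal (exp (- p * (cmod (z - a))\<^sup>2)) * (\<integral>\<^sup>+ w. ennreal ((\<alpha> / pi) * \<phi> w * exp (- q * (cmod (a - w))\<^sup>2)) \<partial>lborel)"
        by (rule nn_integral_cmult) simp
      also have "(\<integral>\<^sup>+ w. ennreal ((\<alpha> / pi) * \<phi> w * exp (- q * (cmod (a - w))\<^sup>2)) \<partial>lborel) = phi_tilde \<alpha> \<phi> t a"
        unfolding phi_tilde_def q_def by (simp add: algebra_simps)
      finally show "(\<integral>\<^sup>+ w. ennreal (exp (- p * (cmod (z - a))\<^sup>2)) * ennreal ((\<alpha> / pi) * \<phi> w * exp (- q * (cmod (a - w))\<^sup>2)) \<partial>lborel) = ennreal (exp (- p * (cmod (z - a))\<^sup>2)) * phi_tilde \<alpha> \<phi> t a" .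
    qed
    also have "\<dots> \<le> (\<integral>\<^sup>+ a. ennreal (exp (- p * (cmod (z - a))\<^sup>2)) * ennreal M' \<partial>lborel)"
      by (rule nn_integral_mono_AE) (use AEb' in \<open>eventually_elim, auto intro: mult_left_mono\<close>)
    also have "\<dots> = (\<integral>\<^sup>+ a. ennreal (exp (- p * (cmod (a - z))\<^sup>2)) \<partial>lborel) * ennreal M'"
      by (subst nn_integral_multc) (auto simp: norm_minus_commute)
    also have "\<dots> = ennreal (pi / p) * ennreal M'"
      by (simp only: gauss_shift[OF p])
    also have "\<dots> = ennreal (pi / (p + q)) * ennreal (M' * (p + q) / p)"
    proof -
      have "p + q \<noteq> 0" "p \<noteq> 0" using p q by auto
      then have "pi / (p + q) * (M' * (p + q) / p) = pi / p * M'" by simp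
      then show ?thesis using p q M' by (simp add: ennreal_mult[symmetric])
    qed
    finally show ?thesis
      using p q by (subst (asm) ennreal_mult_le_mult_iff) auto
  qed
  then show ?thesis by blast
qed

lemma re_id: "2 * Re (cnj a * w) = (cmod a)\<^sup>2 + (cmod w)\<^sup>2 - (cmod (a - w))\<^sup>2"
  unfolding cmod_power2 by (simp add: power2_eq_square algebra_simps)

lemma kernel_norm: "cmod (fock_kernel \<alpha> a w) = exp (\<alpha> * Re (cnj a * w))"
  unfolding fock_kernel_def by (simp add: algebra_simps)

lemma re_id2: "Re (cnj a * w) = ((cmod a)\<^sup>2 + (cmod w)\<^sup>2 - (cmod (a - w))\<^sup>2) / 2"
  using re_id[of a w] by (simp add: field_simps)

lemma kernel_bound:
  assumes "\<alpha> > 0"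
  shows "cmod (fock_kernel \<alpha> a w) * exp (- \<alpha> * (cmod w)\<^sup>2 / 2) = exp (\<alpha> * (cmod a)\<^sup>2 / 2) * exp (- \<alpha> * (cmod (a - w))\<^sup>2 / 2)"
proof -
  have "\<alpha> * Re (cnj a * w) + - \<alpha> * (cmod w)\<^sup>2 / 2 = \<alpha> * (cmod a)\<^sup>2 / 2 + - \<alpha> * (cmod (a - w))\<^sup>2 / 2"
    unfolding re_id2 by (simp add: field_simps)
  then show ?thesis unfolding kernel_norm exp_add[symmetric] by simp
qed

lemma kernel_in_fock:
  assumes \<alpha>: "\<alpha> > 0"
  shows "fock_kernel \<alpha> a \<in> fock_inf \<alpha>" and "fock_inf_norm \<alpha> (fock_kernel \<alpha> a) \<le> exp (\<alpha> * (cmod a)\<^sup>2 / 2)"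
proof -
  have b: "cmod (fock_kernel \<alpha> a w) * exp (- \<alpha> * (cmod w)\<^sup>2 / 2) \<le> exp (\<alpha> * (cmod a)\<^sup>2 / 2)" for w
    unfolding kernel_bound[OF \<alpha>] using \<alpha> by (simp add: mult_left_le)
  have "fock_kernel \<alpha> a holomorphic_on UNIV"
    unfolding fock_kernel_def[abs_def] by (intro holomorphic_intros)
  then show "fock_kernel \<alpha> a \<in> fock_inf \<alpha>" unfolding fock_inf_def using b by blast
  show "fock_inf_norm \<alpha> (fock_kernel \<alpha> a) \<le> exp (\<alpha> * (cmod a)\<^sup>2 / 2)"
    unfolding fock_inf_norm_def by (rule cSUP_least) (use b in auto)
qed

lemma fock_norm_upper:
  assumes "f \<in> fock_inf \<alpha>"
  shows "cmod (f z) * exp (- \<alpha> * (cmod z)\<^sup>2 / 2) \<le> fock_inf_norm \<alpha> f"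
proof -
  from assms obtain C where "\<forall>z. cmod (f z) * exp (- \<alpha> * (cmod z)\<^sup>2 / 2) \<le> C" unfolding fock_inf_def by blast
  then have "bdd_above (range (\<lambda>z. cmod (f z) * exp (- \<alpha> * (cmod z)\<^sup>2 / 2)))" by (auto intro: bdd_aboveI)
  from cSUP_upper[OF UNIV_I this] show ?thesis unfolding fock_inf_norm_def .
qed

lemma fock_norm_nonneg:
  assumes "f \<in> fock_inf \<alpha>" shows "fock_inf_norm \<alpha> f \<ge> 0"
  using fock_norm_upper[OF assms, of 0] by (smt (verit) mult_nonneg_nonneg norm_ge_zero exp_gt_zero)

lemma fwd_bound:
  fixes \<phi> :: "complex \<Rightarrow> real"
  assumes \<alpha>: "\<alpha> > 0" and nn: "\<And>w. \<phi> w \<ge> 0"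
    and meas[measurable]: "\<phi> \<in> borel_measurable lborel"
    and tb: "toeplitz_bounded_fock_inf \<alpha> \<phi>"
  shows "\<exists>B. \<forall>a. phi_tilde \<alpha> \<phi> 2 a \<le> ennreal B"
proof -
  from tb obtain C where C: "\<And>f. f \<in> fock_inf \<alpha> \<Longrightarrow>
      (\<forall>z. integrable lborel (\<lambda>w. complex_of_real (\<phi> w * gauss_wt \<alpha> w) * f w * cnj (fock_kernel \<alpha> z w)))
      \<and> toeplitz \<alpha> \<phi> f \<in> fock_inf \<alpha>
      \<and> fock_inf_norm \<alpha> (toeplitz \<alpha> \<phi> f) \<le> C * fock_inf_norm \<alpha> f"
    unfolding toeplitz_bounded_fock_inf_def by blast
  define C0 where "C0 = max C 0"
  have "phi_tilde \<alpha> \<phi> 2 a \<le> ennreal C0" for a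
  proof -
    define K where "K = fock_kernel \<alpha> a"
    define R where "R = (\<lambda>w. \<phi> w * gauss_wt \<alpha> w * (cmod (K w))\<^sup>2)"
    have Rnn: "R w \<ge> 0" for w unfolding R_def gauss_wt_def using nn[of w] \<alpha> by simp
    have KF: "K \<in> fock_inf \<alpha>" and Kn: "fock_inf_norm \<alpha> K \<le> exp (\<alpha> * (cmod a)\<^sup>2 / 2)"
      unfolding K_def using kernel_in_fock[OF \<alpha>] by auto
    note CK = C[OF KF]
    have Ieq: "(\<lambda>w. complex_of_real (\<phi> w * gauss_wt \<alpha> w) * K w * cnj (fock_kernel \<alpha> a w)) = (\<lambda>w. complex_of_real (R w))"
    proof
      fix w
      have "fock_kernel \<alpha> a w * cnj (fock_kernel \<alpha> a w) = complex_of_real ((cmod (K w))\<^sup>2)"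
        unfolding K_def by (rule complex_norm_square[symmetric])
      then show "complex_of_real (\<phi> w * gauss_wt \<alpha> w) * K w * cnj (fock_kernel \<alpha> a w) = complex_of_real (R w)"
        unfolding R_def K_def by (simp only: mult.assoc of_real_mult)
    qed
    have intC: "integrable lborel (\<lambda>w. complex_of_real (R w))" using CK Ieq by metis
    have intR: "integrable lborel R"
      using integrable_norm[OF intC] Rnn by simp
    have Ta: "toeplitz \<alpha> \<phi> K a = complex_of_real (integral\<^sup>L lborel R)"
      unfolding toeplitz_def Ieq by simp
    have intRnn: "integral\<^sup>L lborel R \<ge> 0" using Rnn by (simp add: integral_nonneg)
    have "integral\<^sup>L lborel R * exp (- \<alpha> * (cmod a)\<^sup>2 / 2) \<le> fock_inf_norm \<alpha> (toeplitz \<alpha> \<phi> K)"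
      using fock_norm_upper[of "toeplitz \<alpha> \<phi> K" \<alpha> a] CK Ta intRnn by simp
    also have "\<dots> \<le> C * fock_inf_norm \<alpha> K" using CK by blast
    also have "\<dots> \<le> C0 * fock_inf_norm \<alpha> K"
      using fock_norm_nonneg[OF KF] by (simp add: C0_def mult_right_mono)
    also have "\<dots> \<le> C0 * exp (\<alpha> * (cmod a)\<^sup>2 / 2)"
      using Kn by (simp add: C0_def mult_left_mono)
    finally have Rb: "integral\<^sup>L lborel R * exp (- \<alpha> * (cmod a)\<^sup>2) \<le> C0"
    proof -
      assume h: "integral\<^sup>L lborel R * exp (- \<alpha> * (cmod a)\<^sup>2 / 2) \<le> C0 * exp (\<alpha> * (cmod a)\<^sup>2 / 2)"
      have "integral\<^sup>L lborel R * exp (- \<alpha> * (cmod a)\<^sup>2) = integral\<^sup>L lborel R * exp (- \<alpha> * (cmod a)\<^sup>2 / 2) * exp (- \<alpha> * (cmod a)\<^sup>2 / 2)"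
        by (simp add: mult.assoc exp_add[symmetric])
      also have "\<dots> \<le> C0 * exp (\<alpha> * (cmod a)\<^sup>2 / 2) * exp (- \<alpha> * (cmod a)\<^sup>2 / 2)"
        using h by (simp add: mult_right_mono)
      also have "\<dots> = C0" by (simp add: mult.assoc exp_add[symmetric])
      finally show ?thesis .
    qed
    have "phi_tilde \<alpha> \<phi> 2 a = (\<integral>\<^sup>+ w. ennreal (R w) * ennreal (exp (- \<alpha> * (cmod a)\<^sup>2)) \<partial>lborel)"
      unfolding phi_tilde_def
    proof (rule nn_integral_cong)
      fix w
      have "(\<alpha> / pi) * \<phi> w * exp (- \<alpha> * 2 * (cmod (a - w))\<^sup>2 / 2) = R w * exp (- \<alpha> * (cmod a)\<^sup>2)"
      proof -
        have "(cmod (K w))\<^sup>2 = exp (\<alpha> * ((cmod a)\<^sup>2 + (cmod w)\<^sup>2 - (cmod (a - w))\<^sup>2))"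
          unfolding K_def kernel_norm re_id[symmetric] by (simp add: exp_double[symmetric] power2_eq_square exp_add[symmetric] algebra_simps)
        then have "R w * exp (- \<alpha> * (cmod a)\<^sup>2) = \<phi> w * (\<alpha> / pi) * (exp (- \<alpha> * (cmod w)\<^sup>2) * exp (\<alpha> * ((cmod a)\<^sup>2 + (cmod w)\<^sup>2 - (cmod (a - w))\<^sup>2)) * exp (- \<alpha> * (cmod a)\<^sup>2))"
          unfolding R_def gauss_wt_def by (simp add: algebra_simps)
        also have "exp (- \<alpha> * (cmod w)\<^sup>2) * exp (\<alpha> * ((cmod a)\<^sup>2 + (cmod w)\<^sup>2 - (cmod (a - w))\<^sup>2)) * exp (- \<alpha> * (cmod a)\<^sup>2) = exp (- \<alpha> * 2 * (cmod (a - w))\<^sup>2 / 2)"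
          unfolding exp_add[symmetric] by (simp add: algebra_simps)
        finally show ?thesis by (simp add: algebra_simps)
      qed
      then show "ennreal ((\<alpha> / pi) * \<phi> w * exp (- \<alpha> * 2 * (cmod (a - w))\<^sup>2 / 2)) = ennreal (R w) * ennreal (exp (- \<alpha> * (cmod a)\<^sup>2))"
        using Rnn[of w] by (simp add: ennreal_mult[symmetric])
    qed
    also have "\<dots> = (\<integral>\<^sup>+ w. ennreal (R w) \<partial>lborel) * ennreal (exp (- \<alpha> * (cmod a)\<^sup>2))"
      by (rule nn_integral_multc) (use intR in \<open>simp add: borel_measurable_integrable\<close>)
    also have "(\<integral>\<^sup>+ w. ennreal (R w) \<partial>lborel) = ennreal (integral\<^sup>L lborel R)"
      by (rule nn_integral_eq_integral) (use intR Rnn in auto)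
    also have "ennreal (integral\<^sup>L lborel R) * ennreal (exp (- \<alpha> * (cmod a)\<^sup>2)) = ennreal (integral\<^sup>L lborel R * exp (- \<alpha> * (cmod a)\<^sup>2))"
      using intRnn by (simp add: ennreal_mult)
    also have "\<dots> \<le> ennreal C0" using Rb by (rule ennreal_leI)
    finally show ?thesis .
  qed
  then show ?thesis by blast
qed

lemma phi_tilde_mono:
  fixes \<phi> :: "complex \<Rightarrow> real"
  assumes \<alpha>: "\<alpha> > 0" and nn: "\<And>w. \<phi> w \<ge> 0" and st: "s \<le> t"
  shows "phi_tilde \<alpha> \<phi> t z \<le> phi_tilde \<alpha> \<phi> s z"
  unfolding phi_tilde_def
proof (rule nn_integral_mono, rule ennreal_leI)
  fix w
  have "- \<alpha> * t * (cmod (z - w))\<^sup>2 / 2 \<le> - \<alpha> * s * (cmod (z - w))\<^sup>2 / 2"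
    using \<alpha> st by (simp add: mult_left_mono mult_right_mono)
  then show "(\<alpha> / pi) * \<phi> w * exp (- \<alpha> * t * (cmod (z - w))\<^sup>2 / 2) \<le> (\<alpha> / pi) * \<phi> w * exp (- \<alpha> * s * (cmod (z - w))\<^sup>2 / 2)"
    using \<alpha> nn[of w] by (intro mult_left_mono) auto
qed

lemma fwd:
  fixes \<phi> :: "complex \<Rightarrow> real"
  assumes \<alpha>: "\<alpha> > 0" and nn: "\<And>w. \<phi> w \<ge> 0"
    and meas[measurable]: "\<phi> \<in> borel_measurable lborel"
    and tb: "toeplitz_bounded_fock_inf \<alpha> \<phi>"
  shows "\<forall>t>0. ess_bounded_ennreal (phi_tilde \<alpha> \<phi> t)"
proof (intro allI impI)
  fix t :: real assume t: "t > 0"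
  from fwd_bound[OF \<alpha> nn meas tb] obtain B where B: "\<And>a. phi_tilde \<alpha> \<phi> 2 a \<le> ennreal B" by blast
  have "\<exists>B'. \<forall>z. phi_tilde \<alpha> \<phi> t z \<le> ennreal B'"
  proof (cases "t < 2")
    case True
    show ?thesis by (rule smooth_bound[OF \<alpha> nn meas t True, of B]) (use B in auto)
  next
    case False
    then show ?thesis using phi_tilde_mono[OF \<alpha> nn, of 2 t] B by (meson linorder_not_less order.trans)
  qed
  then obtain B' where "\<forall>z. phi_tilde \<alpha> \<phi> t z \<le> ennreal B'" by blast
  then have "AE z in lborel. phi_tilde \<alpha> \<phi> t z \<le> ennreal B'" by simp
  then show "ess_bounded_ennreal (phi_tilde \<alpha> \<phi> t)"
    unfolding ess_bounded_ennreal_def using meas_phi_tilde[OF meas] by blast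
qed

lemma exp_partial_le:
  fixes x :: real assumes x: "x \<ge> 0" and I: "finite I"
  shows "(\<Sum>i\<in>I. x ^ i / fact i) \<le> exp x"
proof -
  have s: "(\<lambda>n. x ^ n / fact n) sums exp x" using exp_converges[of x] by (simp add: divide_inverse mult.commute)
  have "(\<Sum>i\<in>I. x ^ i / fact i) \<le> (\<Sum>n. x ^ n / fact n)"
    by (rule sum_le_suminf) (use s x I in \<open>auto simp: sums_iff\<close>)
  also have "\<dots> = exp x" using s by (simp add: sums_iff)
  finally show ?thesis .
qed

lemma exp_term_le:
  fixes x :: real assumes x: "x \<ge> 0"
  shows "x ^ n / fact n \<le> exp x"
  using exp_partial_le[OF x, of "{n}"] by simp

lemma cnj_measurable[measurable]: "cnj \<in> borel_measurable borel"
  by (intro borel_measurable_continuous_onI continuous_intros)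

lemma holo:
  fixes h :: "complex \<Rightarrow> complex" and b :: complex
  assumes hm[measurable]: "h \<in> borel_measurable lborel"
    and hi: "\<And>r. integrable lborel (\<lambda>w. norm (h w) * exp (r * cmod w))"
  shows "(\<lambda>z. \<integral> w. h w * exp (b * z * cnj w) \<partial>lborel) holomorphic_on UNIV"
proof -
  define c where "c n = (\<integral> w. h w * ((b * cnj w) ^ n /\<^sub>R fact n) \<partial>lborel)" for n
  have ser: "(\<lambda>n. c n * z ^ n) sums (\<integral> w. h w * exp (b * z * cnj w) \<partial>lborel)" for z
  proof -
    define f where "f n w = h w * ((b * z * cnj w) ^ n /\<^sub>R fact n)" for n w
    define r where "r = cmod b * cmod z"
    have r: "r \<ge> 0" by (simp add: r_def)
    have nf: "norm (f n w) = norm (h w) * ((r * cmod w) ^ n / fact n)" for n w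
      by (simp add: f_def r_def norm_mult norm_power power_mult_distrib divide_inverse mult.commute)
    have fm[measurable]: "f n \<in> borel_measurable lborel" for n
      unfolding f_def by measurable
    have fb: "norm (f n w) \<le> norm (h w) * exp (r * cmod w)" for n w
      unfolding nf by (rule mult_left_mono) (use exp_term_le r in auto)
    have int: "integrable lborel (f n)" for n
      by (rule Bochner_Integration.integrable_bound[OF hi[of r]]) (use fb in auto)
    have sw: "(\<lambda>n. norm (f n w)) sums (norm (h w) * exp (r * cmod w))" for w
    proof -
      have "(\<lambda>n. (r * cmod w) ^ n / fact n) sums exp (r * cmod w)"
        using exp_converges[of "r * cmod w"] by (simp add: divide_inverse mult.commute)
      from sums_mult[OF this, of "norm (h w)"] show ?thesis unfolding nf .
    qed
    have sumint: "summable (\<lambda>i. (\<integral>w. norm (f i w) \<partial>lborel))"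
    proof (rule summableI_nonneg_bounded)
      show "0 \<le> (\<integral>w. norm (f n w) \<partial>lborel)" for n by simp
      show "(\<Sum>i<n. (\<integral>w. norm (f i w) \<partial>lborel)) \<le> (\<integral>w. norm (h w) * exp (r * cmod w) \<partial>lborel)" for n
      proof -
        have "(\<Sum>i<n. (\<integral>w. norm (f i w) \<partial>lborel)) = (\<integral>w. (\<Sum>i<n. norm (f i w)) \<partial>lborel)"
          by (rule Bochner_Integration.integral_sum[symmetric]) (use int in auto)
        also have "\<dots> \<le> (\<integral>w. norm (h w) * exp (r * cmod w) \<partial>lborel)"
        proof (rule integral_mono)
          show "integrable lborel (\<lambda>w. \<Sum>i<n. norm (f i w))" using int by auto
          show "integrable lborel (\<lambda>w. norm (h w) * exp (r * cmod w))" by (rule hi)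
          fix w
          have "(\<Sum>i<n. norm (f i w)) = norm (h w) * (\<Sum>i<n. (r * cmod w) ^ i / fact i)"
            unfolding nf by (simp add: sum_distrib_left)
          also have "\<dots> \<le> norm (h w) * exp (r * cmod w)"
            by (rule mult_left_mono) (use exp_partial_le r in auto)
          finally show "(\<Sum>i<n. norm (f i w)) \<le> norm (h w) * exp (r * cmod w)" .
        qed
        finally show ?thesis .
      qed
    qed
    have main: "(\<lambda>i. integral\<^sup>L lborel (f i)) sums (\<integral>w. (\<Sum>i. f i w) \<partial>lborel)"
      by (rule sums_integral[OF int _ sumint]) (use sw in \<open>auto simp: sums_iff\<close>)
    have pw: "(\<Sum>i. f i w) = h w * exp (b * z * cnj w)" for w
    proof -
      have "(\<lambda>i. f i w) sums (h w * exp (b * z * cnj w))"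
        unfolding f_def by (rule sums_mult[OF exp_converges])
      then show ?thesis by (simp add: sums_iff)
    qed
    have fi: "integral\<^sup>L lborel (f i) = c i * z ^ i" for i
    proof -
      have "f i = (\<lambda>w. h w * ((b * cnj w) ^ i /\<^sub>R fact i) * z ^ i)"
        unfolding f_def by (auto simp: power_mult_distrib scaleR_conv_of_real algebra_simps)
      then show ?thesis unfolding c_def by simp
    qed
    show ?thesis using main unfolding pw fi .
  qed
  have F: "(\<lambda>z. \<integral> w. h w * exp (b * z * cnj w) \<partial>lborel) = (\<lambda>z. \<Sum>n. c n * z ^ n)"
    using ser by (auto simp: sums_iff)
  have summ: "summable (\<lambda>n. c n * y ^ n)" for y using ser[of y] by (simp add: sums_iff)
  show ?thesis unfolding F holomorphic_on_def field_differentiable_def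
    using termdiffs_strong_converges_everywhere[OF summ] by auto
qed

lemma ess_to_everywhere:
  fixes \<phi> :: "complex \<Rightarrow> real"
  assumes \<alpha>: "\<alpha> > 0" and nn: "\<And>w. \<phi> w \<ge> 0"
    and meas[measurable]: "\<phi> \<in> borel_measurable lborel"
    and H: "ess_bounded_ennreal (phi_tilde \<alpha> \<phi> t)" and st: "0 < s" "s < t"
  shows "\<exists>B\<ge>0. \<forall>z. phi_tilde \<alpha> \<phi> s z \<le> ennreal B"
proof -
  from H obtain M where "AE z in lborel. phi_tilde \<alpha> \<phi> t z \<le> ennreal M"
    unfolding ess_bounded_ennreal_def by blast
  from smooth_bound[OF \<alpha> nn meas st this] obtain B where B: "\<And>z. phi_tilde \<alpha> \<phi> s z \<le> ennreal B" by blast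
  have "phi_tilde \<alpha> \<phi> s z \<le> ennreal (max B 0)" for z
    using B[of z] by (rule order.trans) (simp add: ennreal_leI)
  then show ?thesis by (intro exI[of _ "max B 0"]) auto
qed

lemma bwd:
  fixes \<phi> :: "complex \<Rightarrow> real"
  assumes \<alpha>: "\<alpha> > 0" and nn: "\<And>w. \<phi> w \<ge> 0"
    and meas[measurable]: "\<phi> \<in> borel_measurable lborel"
    and H: "\<forall>t>0. ess_bounded_ennreal (phi_tilde \<alpha> \<phi> t)"
  shows "toeplitz_bounded_fock_inf \<alpha> \<phi>"
proof -
  obtain B1 where B1: "B1 \<ge> 0" "\<And>z. phi_tilde \<alpha> \<phi> 1 z \<le> ennreal B1"
    using ess_to_everywhere[OF \<alpha> nn meas, of 2 1] H by auto
  obtain B0 where B0: "B0 \<ge> 0" "\<And>z. phi_tilde \<alpha> \<phi> (1/2) z \<le> ennreal B0"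
    using ess_to_everywhere[OF \<alpha> nn meas, of 1 "1/2"] H by auto
  have gm[measurable]: "gauss_wt \<alpha> \<in> borel_measurable borel"
    unfolding gauss_wt_def[abs_def] by (intro borel_measurable_continuous_onI continuous_intros)
  have "(\<forall>z. integrable lborel (\<lambda>w. complex_of_real (\<phi> w * gauss_wt \<alpha> w) * f w * cnj (fock_kernel \<alpha> z w)))
      \<and> toeplitz \<alpha> \<phi> f \<in> fock_inf \<alpha>
      \<and> fock_inf_norm \<alpha> (toeplitz \<alpha> \<phi> f) \<le> B1 * fock_inf_norm \<alpha> f" if fF: "f \<in> fock_inf \<alpha>" for f
  proof -
    define N where "N = fock_inf_norm \<alpha> f"
    have N: "N \<ge> 0" unfolding N_def by (rule fock_norm_nonneg[OF fF])
    have fhol: "f holomorphic_on UNIV" using fF unfolding fock_inf_def by blast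
    have fm[measurable]: "f \<in> borel_measurable borel"
      by (intro borel_measurable_continuous_onI holomorphic_on_imp_continuous_on fhol)
    have km[measurable]: "(\<lambda>w. fock_kernel \<alpha> z w) \<in> borel_measurable borel" for z
      unfolding fock_kernel_def by (intro borel_measurable_continuous_onI continuous_intros)
    have fb: "cmod (f w) * exp (- \<alpha> * (cmod w)\<^sup>2 / 2) \<le> N" for w
      unfolding N_def by (rule fock_norm_upper[OF fF])
    have gsplit: "gauss_wt \<alpha> w = (\<alpha> / pi) * (exp (- \<alpha> * (cmod w)\<^sup>2 / 2) * exp (- \<alpha> * (cmod w)\<^sup>2 / 2))" for w
      unfolding gauss_wt_def exp_add[symmetric] by simp
    have hb: "cmod (complex_of_real (\<phi> w * gauss_wt \<alpha> w) * f w) \<le> N * ((\<alpha> / pi) * \<phi> w * exp (- \<alpha> * (cmod w)\<^sup>2 / 2))" for w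
    proof -
      have "cmod (complex_of_real (\<phi> w * gauss_wt \<alpha> w) * f w) = ((\<alpha> / pi) * \<phi> w * exp (- \<alpha> * (cmod w)\<^sup>2 / 2)) * (cmod (f w) * exp (- \<alpha> * (cmod w)\<^sup>2 / 2))"
        unfolding gsplit norm_mult norm_of_real using nn[of w] \<alpha> by (simp add: abs_mult)
      also have "\<dots> \<le> ((\<alpha> / pi) * \<phi> w * exp (- \<alpha> * (cmod w)\<^sup>2 / 2)) * N"
        by (rule mult_left_mono[OF fb]) (use nn[of w] \<alpha> in simp)
      finally show ?thesis by (simp add: mult.commute)
    qed
    have Ib: "cmod (complex_of_real (\<phi> w * gauss_wt \<alpha> w) * f w * cnj (fock_kernel \<alpha> z w))
        \<le> (N * exp (\<alpha> * (cmod z)\<^sup>2 / 2)) * ((\<alpha> / pi) * \<phi> w * exp (- \<alpha> * 1 * (cmod (z - w))\<^sup>2 / 2))" for z w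
    proof -
      have "cmod (complex_of_real (\<phi> w * gauss_wt \<alpha> w) * f w * cnj (fock_kernel \<alpha> z w))
          = cmod (complex_of_real (\<phi> w * gauss_wt \<alpha> w) * f w) * cmod (fock_kernel \<alpha> z w)"
        by (simp add: norm_mult)
      also have "\<dots> \<le> N * ((\<alpha> / pi) * \<phi> w * exp (- \<alpha> * (cmod w)\<^sup>2 / 2)) * cmod (fock_kernel \<alpha> z w)"
        by (rule mult_right_mono[OF hb]) simp
      also have "\<dots> = N * ((\<alpha> / pi) * \<phi> w) * (cmod (fock_kernel \<alpha> z w) * exp (- \<alpha> * (cmod w)\<^sup>2 / 2))"
        by (simp add: algebra_simps)
      also have "\<dots> = (N * exp (\<alpha> * (cmod z)\<^sup>2 / 2)) * ((\<alpha> / pi) * \<phi> w * exp (- \<alpha> * 1 * (cmod (z - w))\<^sup>2 / 2))"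
        unfolding kernel_bound[OF \<alpha>] by (simp add: algebra_simps norm_minus_commute)
      finally show ?thesis .
    qed
    have nnI: "(\<integral>\<^sup>+ w. ennreal (cmod (complex_of_real (\<phi> w * gauss_wt \<alpha> w) * f w * cnj (fock_kernel \<alpha> z w))) \<partial>lborel)
        \<le> ennreal (N * exp (\<alpha> * (cmod z)\<^sup>2 / 2) * B1)" for z
    proof -
      have "(\<integral>\<^sup>+ w. ennreal (cmod (complex_of_real (\<phi> w * gauss_wt \<alpha> w) * f w * cnj (fock_kernel \<alpha> z w))) \<partial>lborel)
          \<le> (\<integral>\<^sup>+ w. ennreal (N * exp (\<alpha> * (cmod z)\<^sup>2 / 2)) * ennreal ((\<alpha> / pi) * \<phi> w * exp (- \<alpha> * 1 * (cmod (z - w))\<^sup>2 / 2)) \<partial>lborel)"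
        by (rule nn_integral_mono) (use Ib N nn \<alpha> in \<open>auto simp: ennreal_mult[symmetric] intro!: ennreal_leI\<close>)
      also have "\<dots> = ennreal (N * exp (\<alpha> * (cmod z)\<^sup>2 / 2)) * phi_tilde \<alpha> \<phi> 1 z"
        unfolding phi_tilde_def by (rule nn_integral_cmult) simp
      also have "\<dots> \<le> ennreal (N * exp (\<alpha> * (cmod z)\<^sup>2 / 2)) * ennreal B1"
        by (rule mult_left_mono[OF B1(2)]) simp
      also have "\<dots> = ennreal (N * exp (\<alpha> * (cmod z)\<^sup>2 / 2) * B1)"
        using N B1 by (simp add: ennreal_mult[symmetric])
      finally show ?thesis .
    qed
    have intI: "integrable lborel (\<lambda>w. complex_of_real (\<phi> w * gauss_wt \<alpha> w) * f w * cnj (fock_kernel \<alpha> z w))" for z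
      by (rule integrableI_bounded) (use nnI[of z] in \<open>auto intro: le_less_trans\<close>)
    have Tb: "cmod (toeplitz \<alpha> \<phi> f z) * exp (- \<alpha> * (cmod z)\<^sup>2 / 2) \<le> B1 * N" for z
    proof -
      have "ennreal (cmod (toeplitz \<alpha> \<phi> f z)) \<le> ennreal (N * exp (\<alpha> * (cmod z)\<^sup>2 / 2) * B1)"
        unfolding toeplitz_def by (rule order.trans[OF integral_norm_bound_ennreal[OF intI] nnI])
      then have "cmod (toeplitz \<alpha> \<phi> f z) \<le> N * exp (\<alpha> * (cmod z)\<^sup>2 / 2) * B1"
        using N B1 by (subst (asm) ennreal_le_iff) auto
      then have "cmod (toeplitz \<alpha> \<phi> f z) * exp (- \<alpha> * (cmod z)\<^sup>2 / 2) \<le> N * exp (\<alpha> * (cmod z)\<^sup>2 / 2) * B1 * exp (- \<alpha> * (cmod z)\<^sup>2 / 2)"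
        by (rule mult_right_mono) simp
      also have "\<dots> = B1 * N" by (simp add: algebra_simps exp_add[symmetric])
      finally show ?thesis .
    qed
    have hol: "toeplitz \<alpha> \<phi> f holomorphic_on UNIV"
    proof -
      define h where "h w = complex_of_real (\<phi> w * gauss_wt \<alpha> w) * f w" for w
      have hm[measurable]: "h \<in> borel_measurable lborel" unfolding h_def by measurable
      have hi: "integrable lborel (\<lambda>w. norm (h w) * exp (r * cmod w))" for r
      proof (rule integrableI_bounded)
        show "(\<lambda>w. norm (h w) * exp (r * cmod w)) \<in> borel_measurable lborel" by measurable
        have pb: "norm (norm (h w) * exp (r * cmod w)) \<le> (N * exp (r\<^sup>2 / \<alpha>)) * ((\<alpha> / pi) * \<phi> w * exp (- \<alpha> * (1/2) * (cmod (0 - w))\<^sup>2 / 2))" for w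
        proof -
          have e: "r * cmod w - \<alpha> * (cmod w)\<^sup>2 / 2 \<le> r\<^sup>2 / \<alpha> - \<alpha> * (1/2) * (cmod (0 - w))\<^sup>2 / 2"
          proof -
            have "0 \<le> (\<alpha> * cmod w / 2 - r)\<^sup>2" by simp
            then have "0 \<le> (\<alpha> * cmod w / 2 - r)\<^sup>2 / \<alpha>" using \<alpha> by simp
            also have "(\<alpha> * cmod w / 2 - r)\<^sup>2 / \<alpha> = \<alpha> * (cmod w)\<^sup>2 / 4 - r * cmod w + r\<^sup>2 / \<alpha>"
              using \<alpha> by (simp add: power2_eq_square field_simps)
            finally show ?thesis by simp
          qed
          have "norm (norm (h w) * exp (r * cmod w)) = norm (h w) * exp (r * cmod w)" by simp
          also have "\<dots> \<le> N * ((\<alpha> / pi) * \<phi> w * exp (- \<alpha> * (cmod w)\<^sup>2 / 2)) * exp (r * cmod w)"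
            unfolding h_def by (rule mult_right_mono[OF hb]) simp
          also have "\<dots> = N * ((\<alpha> / pi) * \<phi> w) * exp (r * cmod w - \<alpha> * (cmod w)\<^sup>2 / 2)"
          proof -
            have "exp (r * cmod w - \<alpha> * (cmod w)\<^sup>2 / 2) = exp (- \<alpha> * (cmod w)\<^sup>2 / 2) * exp (r * cmod w)"
              by (simp add: exp_add[symmetric])
            then show ?thesis by (simp only: mult.assoc)
          qed
          also have "\<dots> \<le> N * ((\<alpha> / pi) * \<phi> w) * exp (r\<^sup>2 / \<alpha> - \<alpha> * (1/2) * (cmod (0 - w))\<^sup>2 / 2)"
            by (rule mult_left_mono) (use e N nn[of w] \<alpha> in auto)
          also have "\<dots> = (N * exp (r\<^sup>2 / \<alpha>)) * ((\<alpha> / pi) * \<phi> w * exp (- \<alpha> * (1/2) * (cmod (0 - w))\<^sup>2 / 2))"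
          proof -
            have "exp (r\<^sup>2 / \<alpha> - \<alpha> * (1/2) * (cmod (0 - w))\<^sup>2 / 2) = exp (r\<^sup>2 / \<alpha>) * exp (- \<alpha> * (1/2) * (cmod (0 - w))\<^sup>2 / 2)"
              by (simp add: exp_add[symmetric])
            then show ?thesis by (simp only: ac_simps)
          qed
          finally show ?thesis .
        qed
        have "(\<integral>\<^sup>+ w. ennreal (norm (norm (h w) * exp (r * cmod w))) \<partial>lborel)
            \<le> (\<integral>\<^sup>+ w. ennreal (N * exp (r\<^sup>2 / \<alpha>)) * ennreal ((\<alpha> / pi) * \<phi> w * exp (- \<alpha> * (1/2) * (cmod (0 - w))\<^sup>2 / 2)) \<partial>lborel)"
          by (rule nn_integral_mono) (use pb N nn \<alpha> in \<open>auto simp: ennreal_mult[symmetric] intro!: ennreal_leI\<close>)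
        also have "\<dots> = ennreal (N * exp (r\<^sup>2 / \<alpha>)) * phi_tilde \<alpha> \<phi> (1/2) 0"
          unfolding phi_tilde_def by (rule nn_integral_cmult) simp
        also have "\<dots> \<le> ennreal (N * exp (r\<^sup>2 / \<alpha>)) * ennreal B0"
          by (rule mult_left_mono[OF B0(2)]) simp
        also have "\<dots> < \<infinity>" by (simp add: ennreal_mult_less_top)
        finally show "(\<integral>\<^sup>+ w. ennreal (norm (norm (h w) * exp (r * cmod w))) \<partial>lborel) < \<infinity>" .
      qed
      have "toeplitz \<alpha> \<phi> f = (\<lambda>z. \<integral> w. h w * exp (complex_of_real \<alpha> * z * cnj w) \<partial>lborel)"
        unfolding toeplitz_def h_def fock_kernel_def by (simp add: exp_cnj mult.assoc)
      then show ?thesis using holo[OF hm hi] by simp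
    qed
    show ?thesis
    proof (intro conjI allI)
      show "integrable lborel (\<lambda>w. complex_of_real (\<phi> w * gauss_wt \<alpha> w) * f w * cnj (fock_kernel \<alpha> z w))" for z by (rule intI)
      show "toeplitz \<alpha> \<phi> f \<in> fock_inf \<alpha>" unfolding fock_inf_def using hol Tb by blast
      show "fock_inf_norm \<alpha> (toeplitz \<alpha> \<phi> f) \<le> B1 * fock_inf_norm \<alpha> f"
        unfolding fock_inf_norm_def[of \<alpha> "toeplitz \<alpha> \<phi> f"] N_def[symmetric] by (rule cSUP_least) (use Tb in auto)
    qed
  qed
  then show ?thesis unfolding toeplitz_bounded_fock_inf_def by blast
qed


theorem theorem4p3:
  fixes \<alpha> :: real and \<phi> :: "complex \<Rightarrow> real"
  assumes "\<alpha> > 0"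
    and "\<And>w. \<phi> w \<ge> 0"
    and "\<phi> \<in> borel_measurable lborel"
    and "cond_I1 \<alpha> \<phi>"
  shows "toeplitz_bounded_fock_inf \<alpha> \<phi> \<longleftrightarrow>
         (\<forall>t>0. ess_bounded_ennreal (phi_tilde \<alpha> \<phi> t))"
  using fwd[OF assms(1-3)] bwd[OF assms(1-3)] by blast

end
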